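(* Assume (A1), (A2), (A4), (A5), (A6) and (A7) of the context. Then for $1\le k,\ell\le d$, $$\frac1{\sqrt n}\sum_{i=1}^n\Big\{R_{b_n,k}(Y_i)R_{b_n,\ell}(Y_i)+\frac{X_{i\ell}R_{b_n,k}(Y_i)f(Y_i)}{2f_{b_n}(Y_i)}+\frac{X_{ik}R_{b_n,\ell}(Y_i)f(Y_i)}{2f_{b_n}(Y_i)}$$ $$-\mathbb{E}\Big[R_{b_n,k}(Y)R_{b_n,\ell}(Y)+\frac{X_\ell R_{b_n,k}(Y)f(Y)}{2f_{b_n}(Y)}+\frac{X_kR_{b_n,\ell}(Y)f(Y)}{2f_{b_n}(Y)}\Big]\Big\}$$ $$=\frac1{\sqrt n}\sum_{i=1}^n\Big\{R_k(Y_i)R_\ell(Y_i)+\tfrac12X_{i\ell}R_k(Y_i)+\tfrac12X_{ik}R_\ell(Y_i)-2\,\mathbb{E}\big[R_k(Y)R_\ell(Y)\big]\Big\}+o_p(1).$$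
   Context: Setting. $X=(X_1,\dots,X_d)^T$ is an $\mathbb{R}^d$-valued random vector and $Y$ a real random variable with density $f>0$ on $\mathbb{R}$; each $(X_j,Y)$ has joint density $f_{(X_j,Y)}$; $g_j(y)=\int xf_{(X_j,Y)}(x,y)dx$, $R_j=g_j/f$ (so $R_j(y)=\mathbb{E}(X_j\mid Y=y)$); $f,g_j\in L^2(\mathbb{R})$. $\{(X^{(i)},Y_i)\}_{i=1}^n$ i.i.d. sample of $(X,Y)$, $X^{(i)}=(X_{i1},\dots,X_{id})^T$. $\varphi$ father wavelet, $\psi$ associated mother wavelet forming (via $\varphi(\cdot-k)$, $2^{\ell/2}\psi(2^\ell\cdot-k)$) an orthonormal basis of $L^2(\mathbb{R})$; $K(x,y)=\sum_k\varphi(x-k)\varphi(y-k)$. $(j_n)$ increasing integers tending to $\infty$. $(b_n)$ positive, $b_n\to0$; $f_{b_n}=\max(f,b_n)$, $R_{b_n,j}=g_j/f_{b_n}$. $u_n\sim v_n$ means $u_n/v_n$ bounded away from $0$ and $\infty$ for large $n$. Assumptions. (A1) $\|X\|\le G$ for some $G>0$. (A2) $f,g_j$ three times differentiable; there exist a neighborhood $U$ of $0$ and $c>0$ with $|f^{(3)}(y+u)-f^{(3)}(y)|\le c|u|$, $|g_j^{(3)}(y+u)-g_j^{(3)}(y)|\le c|u|$ for all $y$, $u\in U$, $j$. (A4) $\varphi,\psi$ bounded, compactly supported. (A5) $|K(x,y)|\le\Phi(x-y)$, $\Phi\ge0$ bounded, compactly supported, symmetric, $\int u^2\Phi^2<\infty$,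 $\int|u|^k\Phi<\infty$ for $k\in\{0,1,4\}$; $\int K(x,y)(y-x)^kdy=0$ for all $x$, $k\in\{1,2,3\}$. (A6) $2^{-j_n}\sim n^{-c_1}$, $b_n\sim n^{-c_2}$, $0<c_2<1/10$, $1/8+c_2/4<c_1<1/4-c_2$. (A7) $\mathbb{E}[R_j^2(Y)]<\infty$ for all $j$, and $\sqrt n\,\mathbb{E}[|R_k(Y)R_\ell(Y)|\mathbf 1_{\{f(Y)\le a_n\}}]\to0$ for all $k,\ell$ and every positive $(a_n)$ with $a_n\sim b_n$. *)

theory Defs
  imports "HOL-Probability.Probability"
begin

definition L2 :: "(real \<Rightarrow> real) \<Rightarrow> bool" where
  "L2 h \<longleftrightarrow> h \<in> borel_measurable lborel \<and> integrable lborel (\<lambda>x. (h x)^2)"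

definition l2_ip :: "(real \<Rightarrow> real) \<Rightarrow> (real \<Rightarrow> real) \<Rightarrow> real" where
  "l2_ip h1 h2 = (\<integral>x. h1 x * h2 x \<partial>lborel)"

definition wavelet_family ::
  "(real \<Rightarrow> real) \<Rightarrow> (real \<Rightarrow> real) \<Rightarrow> int + (nat \<times> int) \<Rightarrow> real \<Rightarrow> real" where
  "wavelet_family \<phi> \<psi> a = (case a of
      Inl k \<Rightarrow> (\<lambda>x. \<phi> (x - of_int k))
    | Inr lk \<Rightarrow> (\<lambda>x. 2 powr (real (fst lk) / 2) * \<psi> (2 ^ (fst lk) * x - of_int (snd lk))))"

definition is_wavelet_ONB :: "(real \<Rightarrow> real) \<Rightarrow> (real \<Rightarrow> real) \<Rightarrow> bool" where
  "is_wavelet_ONB \<phi> \<psi> \<longleftrightarrow>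
     (\<forall>a. L2 (wavelet_family \<phi> \<psi> a)) \<and>
     (\<forall>a b. l2_ip (wavelet_family \<phi> \<psi> a) (wavelet_family \<phi> \<psi> b) = (if a = b then 1 else 0)) \<and>
     (\<forall>h. L2 h \<and> (\<forall>a. l2_ip h (wavelet_family \<phi> \<psi> a) = 0) \<longrightarrow> (AE x in lborel. h x = 0))"

definition wavelet_kernel :: "(real \<Rightarrow> real) \<Rightarrow> real \<Rightarrow> real \<Rightarrow> real" where
  "wavelet_kernel \<phi> x y = (\<Sum>\<^sub>\<infinity>k::int. \<phi> (x - of_int k) * \<phi> (y - of_int k))"

definition compact_support :: "(real \<Rightarrow> real) \<Rightarrow> bool" where
  "compact_support h \<longleftrightarrow> (\<exists>A. \<forall>x. A < \<bar>x\<bar> \<longrightarrow> h x = 0)"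

definition thrice_differentiable :: "(real \<Rightarrow> real) \<Rightarrow> bool" where
  "thrice_differentiable h \<longleftrightarrow> (\<forall>m<3. \<forall>y. ((deriv ^^ m) h) differentiable (at y))"

definition seq_equiv :: "(nat \<Rightarrow> real) \<Rightarrow> (nat \<Rightarrow> real) \<Rightarrow> bool" where
  "seq_equiv u v \<longleftrightarrow> (\<exists>A B. 0 < A \<and> 0 < B \<and>
      (\<forall>\<^sub>F n in sequentially. A \<le> u n / v n \<and> u n / v n \<le> B))"

definition gfun :: "('d \<Rightarrow> real \<Rightarrow> real \<Rightarrow> real) \<Rightarrow> 'd \<Rightarrow> real \<Rightarrow> real" where
  "gfun fXY j y = (\<integral>x. x * fXY j x y \<partial>lborel)"

definition Rfun :: "(real \<Rightarrow> real) \<Rightarrow> ('d \<Rightarrow> real \<Rightarrow> real \<Rightarrow> real) \<Rightarrow> 'd \<Rightarrow> real \<Rightarrow> real" where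
  "Rfun f fXY j y = gfun fXY j y / f y"

definition Rbfun :: "real \<Rightarrow> (real \<Rightarrow> real) \<Rightarrow> ('d \<Rightarrow> real \<Rightarrow> real \<Rightarrow> real) \<Rightarrow> 'd \<Rightarrow> real \<Rightarrow> real" where
  "Rbfun bn f fXY j y = gfun fXY j y / max (f y) bn"

definition o_p_one :: "'a measure \<Rightarrow> (nat \<Rightarrow> 'a \<Rightarrow> real) \<Rightarrow> bool" where
  "o_p_one M Z \<longleftrightarrow> (\<forall>e>0. (\<lambda>n. measure M {\<omega> \<in> space M. e < \<bar>Z n \<omega>\<bar>}) \<longlonglongrightarrow> 0)"

end

theory Submission
  imports Defs
begin

lemma psf: "pair_sigma_finite lborel lborel"
  by (simp add: pair_sigma_finite_def lborel.sigma_finite_measure_axioms)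

lemma AE_from_density:
  assumes D: "distributed M lborel Y (\<lambda>y. ennreal (f y))" and P: "AE y in lborel. P y"
  shows "AE \<omega> in M. P (Y \<omega>)"
proof -
  have "AE y in density lborel (\<lambda>y. ennreal (f y)). P y"
    using P by (subst AE_density[OF distributed_borel_measurable[OF D]]) (auto elim: eventually_mono)
  hence "AE y in distr M lborel Y. P y" by (simp only: distributed_distr_eq_density[OF D])
  thus ?thesis by (rule AE_distrD[OF distributed_measurable[OF D]])
qed

lemma g_bound:
  fixes h :: "real \<Rightarrow> real \<Rightarrow> real" and Xj Y :: "'a \<Rightarrow> real"
  assumes P: "prob_space M"
    and DY: "distributed M lborel Y (\<lambda>y. ennreal (f y))"
    and hnn: "\<forall>x y. 0 \<le> h x y"
    and DJ: "distributed M (lborel \<Otimes>\<^sub>M lborel) (\<lambda>\<omega>. (Xj \<omega>, Y \<omega>)) (\<lambda>p. ennreal (h (fst p) (snd p)))"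
    and bnd: "\<forall>\<omega>\<in>space M. \<bar>Xj \<omega>\<bar> \<le> G" and G: "0 \<le> G" and fpos: "\<forall>y. 0 < f y"
  shows "AE y in lborel. \<bar>\<integral>x. x * h x y \<partial>lborel\<bar> \<le> G * f y"
proof -
  interpret prob_space M by fact
  have hm[measurable]: "(\<lambda>p. h (fst p) (snd p)) \<in> borel_measurable (lborel \<Otimes>\<^sub>M lborel)"
    by (rule distributed_real_measurable[OF _ DJ]) (use hnn in auto)
  have hm2[measurable]: "(\<lambda>x. h x y) \<in> borel_measurable lborel" for y
    using measurable_compose[OF measurable_Pair2'[of y lborel lborel] hm] by simp
  define A where "A = {p::real\<times>real. G < \<bar>fst p\<bar>}"
  have "A = {p \<in> space (lborel \<Otimes>\<^sub>M lborel). G < \<bar>fst p\<bar>}"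
    by (auto simp: A_def space_pair_measure)
  also have "\<dots> \<in> sets (lborel \<Otimes>\<^sub>M lborel)" by measurable
  finally have A[measurable]: "A \<in> sets (lborel \<Otimes>\<^sub>M lborel)" .
  have "emeasure M ((\<lambda>\<omega>. (Xj \<omega>, Y \<omega>)) -` A \<inter> space M) = (\<integral>\<^sup>+p. ennreal (h (fst p) (snd p)) * indicator A p \<partial>(lborel \<Otimes>\<^sub>M lborel))"
    by (rule distributed_emeasure[OF DJ A])
  moreover have "(\<lambda>\<omega>. (Xj \<omega>, Y \<omega>)) -` A \<inter> space M = {}"
    using bnd by (auto simp: A_def)
  ultimately have "(\<integral>\<^sup>+p. ennreal (h (fst p) (snd p)) * indicator A p \<partial>(lborel \<Otimes>\<^sub>M lborel)) = 0" by simp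
  hence "AE p in lborel \<Otimes>\<^sub>M lborel. ennreal (h (fst p) (snd p)) * indicator A p = 0"
    by (subst (asm) nn_integral_0_iff_AE) auto
  hence "AE p in lborel \<Otimes>\<^sub>M lborel. G < \<bar>fst p\<bar> \<longrightarrow> h (fst p) (snd p) = 0"
    by (rule eventually_mono) (use hnn in \<open>auto simp: A_def indicator_def\<close>)
  moreover have S: "{x \<in> space (lborel \<Otimes>\<^sub>M lborel). G < \<bar>fst x\<bar> \<longrightarrow> h (fst x) (snd x) = 0} \<in> sets (lborel \<Otimes>\<^sub>M lborel)"
    by measurable
  ultimately have "AE x in lborel. AE y in lborel. G < \<bar>x\<bar> \<longrightarrow> h x y = 0"
    using pair_sigma_finite.AE_pair_iff[OF psf S] by simp
  hence 2: "AE y in lborel. AE x in lborel. G < \<bar>x\<bar> \<longrightarrow> h x y = 0"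
    using pair_sigma_finite.AE_commute[OF psf S] by simp
  have 3: "AE y in lborel. ennreal (f y) = (\<integral>\<^sup>+x. ennreal (h x y) \<partial>lborel)"
    using distributed_marginal_eq_joint2[of lborel lborel Y _ Xj, OF _ _ DY DJ]
    by (simp add: lborel.sigma_finite_measure_axioms)
  show ?thesis
    using 2 3
  proof eventually_elim
    case (elim y)
    have "(\<integral>\<^sup>+x. ennreal (norm (x * h x y)) \<partial>lborel) \<le> (\<integral>\<^sup>+x. G * ennreal (h x y) \<partial>lborel)"
      using elim(1)
    proof (intro nn_integral_mono_AE, eventually_elim)
      case (elim x)
      then show ?case using hnn G
        by (cases "G < \<bar>x\<bar>") (auto simp: abs_mult ennreal_mult[symmetric] intro!: ennreal_leI mult_right_mono)
    qed
    also have "\<dots> = G * ennreal (f y)"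
      using elim(2) by (subst nn_integral_cmult) auto
    also have "\<dots> = ennreal (G * f y)" using G by (simp add: ennreal_mult')
    finally have "(\<integral>x. norm (x * h x y) \<partial>lborel) \<le> G * f y"
      using G fpos by (intro integral_real_bounded) (auto simp: less_imp_le)
    moreover have "norm (\<integral>x. x * h x y \<partial>lborel) \<le> (\<integral>x. norm (x * h x y) \<partial>lborel)"
      by (rule integral_norm_bound)
    ultimately show ?case unfolding real_norm_def by linarith
  qed
qed

lemma tower:
  fixes h :: "real \<Rightarrow> real \<Rightarrow> real" and Xj Y :: "'a \<Rightarrow> real" and phi :: "real \<Rightarrow> real"
  assumes P: "prob_space M"
    and DY: "distributed M lborel Y (\<lambda>y. ennreal (f y))"
    and hnn: "\<forall>x y. 0 \<le> h x y"
    and DJ: "distributed M (lborel \<Otimes>\<^sub>M lborel) (\<lambda>\<omega>. (Xj \<omega>, Y \<omega>)) (\<lambda>p. ennreal (h (fst p) (snd p)))"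
    and bnd: "\<forall>\<omega>\<in>space M. \<bar>Xj \<omega>\<bar> \<le> G" and fpos: "\<forall>y. 0 < f y"
    and Xm[measurable]: "Xj \<in> borel_measurable M"
    and fm[measurable]: "f \<in> borel_measurable lborel"
    and gm[measurable]: "(\<lambda>y. \<integral>x. x * h x y \<partial>lborel) \<in> borel_measurable lborel"
    and phim[measurable]: "phi \<in> borel_measurable lborel"
    and phib: "AE y in lborel. \<bar>phi y\<bar> \<le> C"
  shows "(\<integral>\<omega>. Xj \<omega> * phi (Y \<omega>) \<partial>M) = (\<integral>\<omega>. (\<integral>x. x * h x (Y \<omega>) \<partial>lborel) / f (Y \<omega>) * phi (Y \<omega>) \<partial>M)"
proof -
  interpret prob_space M by fact
  have Ym[measurable]: "Y \<in> measurable M lborel" by (rule distributed_measurable[OF DY])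
  have phiY: "AE \<omega> in M. \<bar>phi (Y \<omega>)\<bar> \<le> C" by (rule AE_from_density[OF DY phib])
  have int: "integrable M (\<lambda>\<omega>. Xj \<omega> * phi (Y \<omega>))"
  proof (rule integrable_const_bound[where B="G * C"])
    show "AE \<omega> in M. norm (Xj \<omega> * phi (Y \<omega>)) \<le> G * C"
      using phiY AE_space
    proof eventually_elim
      case (elim \<omega>)
      then show ?case using bnd by (auto simp: abs_mult intro!: mult_mono)
    qed
  qed measurable
  have eq1: "(\<integral>\<omega>. Xj \<omega> * phi (Y \<omega>) \<partial>M) = (\<integral>p. h (fst p) (snd p) * (fst p * phi (snd p)) \<partial>(lborel \<Otimes>\<^sub>M lborel))"
    using distributed_integral[OF DJ, of "\<lambda>p. fst p * phi (snd p)"] hnn by simp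
  have int2: "integrable (lborel \<Otimes>\<^sub>M lborel) (\<lambda>p. h (fst p) (snd p) * (fst p * phi (snd p)))"
    using int distributed_integrable[OF DJ, of "\<lambda>p. fst p * phi (snd p)"] hnn by simp
  hence int3: "integrable (lborel \<Otimes>\<^sub>M lborel) (\<lambda>(x, y). h x y * (x * phi y))"
    by (simp add: split_beta')
  have eq2: "(\<integral>p. h (fst p) (snd p) * (fst p * phi (snd p)) \<partial>(lborel \<Otimes>\<^sub>M lborel))
      = (\<integral>y. (\<integral>x. h x y * (x * phi y) \<partial>lborel) \<partial>lborel)"
    using pair_sigma_finite.integral_snd[OF psf int3] by (simp add: split_beta')
  have eq3: "(\<integral>x. h x y * (x * phi y) \<partial>lborel) = f y * ((\<integral>x. x * h x y \<partial>lborel) / f y * phi y)" for y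
  proof -
    have "(\<integral>x. h x y * (x * phi y) \<partial>lborel) = (\<integral>x. x * h x y * phi y \<partial>lborel)"
      by (simp add: ac_simps)
    also have "\<dots> = (\<integral>x. x * h x y \<partial>lborel) * phi y" by (rule integral_mult_left_zero)
    finally show ?thesis using fpos[rule_format, of y] by simp
  qed
  have eq4: "(\<integral>y. f y * ((\<integral>x. x * h x y \<partial>lborel) / f y * phi y) \<partial>lborel)
     = (\<integral>\<omega>. (\<integral>x. x * h x (Y \<omega>) \<partial>lborel) / f (Y \<omega>) * phi (Y \<omega>) \<partial>M)"
    using distributed_integral[OF DY, of "\<lambda>y. (\<integral>x. x * h x y \<partial>lborel) / f y * phi y"] fpos
    by (simp add: less_imp_le)
  show ?thesis using eq1 eq2 eq3 eq4 by simp
qed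

lemma iid_sq:
  fixes Z :: "nat \<Rightarrow> 'a \<Rightarrow> 'b::topological_space" and W :: "'a \<Rightarrow> 'b" and g :: "'b \<Rightarrow> real"
  assumes P: "prob_space M"
    and ind: "prob_space.indep_vars M (\<lambda>_. borel) Z UNIV"
    and dis: "\<forall>i. distr M borel (Z i) = distr M borel W"
    and Wm[measurable]: "W \<in> borel_measurable M"
    and gm[measurable]: "g \<in> borel_measurable borel"
    and gb: "AE \<omega> in M. \<bar>g (W \<omega>)\<bar> \<le> B"
    and I: "finite I"
  shows "(\<integral>\<omega>. (\<Sum>i\<in>I. g (Z i \<omega>) - (\<integral>\<omega>'. g (W \<omega>') \<partial>M))^2 \<partial>M)
          = real (card I) * (\<integral>\<omega>. (g (W \<omega>) - (\<integral>\<omega>'. g (W \<omega>') \<partial>M))^2 \<partial>M)"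
    and "integrable M (\<lambda>\<omega>. (\<Sum>i\<in>I. g (Z i \<omega>) - (\<integral>\<omega>'. g (W \<omega>') \<partial>M))^2)"
proof -
  interpret prob_space M by fact
  define \<mu> where "\<mu> = (\<integral>\<omega>'. g (W \<omega>') \<partial>M)"
  define V where "V i \<omega> = g (Z i \<omega>) - \<mu>" for i \<omega>
  have Zm[measurable]: "Z i \<in> borel_measurable M" for i
    using ind by (auto simp: indep_vars_def)
  have Vm[measurable]: "V i \<in> borel_measurable M" for i unfolding V_def by measurable
  have Sg: "{x \<in> space borel. \<bar>g x\<bar> \<le> B} \<in> sets borel" by measurable
  have "AE x in distr M borel W. \<bar>g x\<bar> \<le> B"
    using gb by (subst AE_distr_iff) (auto simp: Sg)
  hence "AE x in distr M borel (Z i). \<bar>g x\<bar> \<le> B" for i using dis by metis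
  hence gZ: "AE \<omega> in M. \<bar>g (Z i \<omega>)\<bar> \<le> B" for i
    by (subst (asm) AE_distr_iff) (auto simp: Sg)
  have Vb: "AE \<omega> in M. \<bar>V i \<omega>\<bar> \<le> B + \<bar>\<mu>\<bar>" for i
    using gZ[of i] by eventually_elim (auto simp: V_def)
  have Vint: "integrable M (V i)" for i
    by (rule integrable_const_bound[OF _ Vm, where B="B + \<bar>\<mu>\<bar>"]) (use Vb in auto)
  have Vint2: "integrable M (\<lambda>\<omega>. V i \<omega> * V j \<omega>)" for i j
  proof (rule integrable_const_bound[where B="(B + \<bar>\<mu>\<bar>) * (B + \<bar>\<mu>\<bar>)"])
    show "AE \<omega> in M. norm (V i \<omega> * V j \<omega>) \<le> (B + \<bar>\<mu>\<bar>) * (B + \<bar>\<mu>\<bar>)"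
      using Vb[of i] Vb[of j] by eventually_elim (auto simp: abs_mult intro!: mult_mono)
  qed measurable
  have gZW: "(\<integral>\<omega>. F (Z i \<omega>) \<partial>M) = (\<integral>\<omega>. F (W \<omega>) \<partial>M)" if [measurable]: "F \<in> borel_measurable borel" for F :: "'b \<Rightarrow> real" and i
  proof -
    have "(\<integral>\<omega>. F (Z i \<omega>) \<partial>M) = integral\<^sup>L (distr M borel (Z i)) F"
      by (rule integral_distr[symmetric]) auto
    also have "\<dots> = integral\<^sup>L (distr M borel W) F" using dis by simp
    also have "\<dots> = (\<integral>\<omega>. F (W \<omega>) \<partial>M)"
      by (rule integral_distr) auto
    finally show ?thesis .
  qed
  have EV: "(\<integral>\<omega>. V i \<omega> \<partial>M) = 0" for i
  proof -
    have "(\<integral>\<omega>. V i \<omega> \<partial>M) = (\<integral>\<omega>. g (Z i \<omega>) - \<mu> \<partial>M)" by (simp add: V_def)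
    also have "\<dots> = (\<integral>\<omega>. g (W \<omega>) - \<mu> \<partial>M)" by (rule gZW) measurable
    also have "\<dots> = 0"
    proof -
      have "integrable M (\<lambda>\<omega>. g (W \<omega>))"
        by (rule integrable_const_bound[where B=B]) (use gb in auto)
      thus ?thesis by (simp add: \<mu>_def prob_space)
    qed
    finally show ?thesis .
  qed
  have indV: "indep_vars (\<lambda>_. borel) V UNIV"
    unfolding V_def by (rule indep_vars_compose2[OF ind]) measurable
  have cross: "(\<integral>\<omega>. V i \<omega> * V j \<omega> \<partial>M) = (if i = j then (\<integral>\<omega>. (g (W \<omega>) - \<mu>)^2 \<partial>M) else 0)" for i j
  proof (cases "i = j")
    case True
    have "(\<integral>\<omega>. V i \<omega> * V i \<omega> \<partial>M) = (\<integral>\<omega>. (g (Z i \<omega>) - \<mu>)^2 \<partial>M)"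
      by (simp add: V_def power2_eq_square)
    also have "\<dots> = (\<integral>\<omega>. (g (W \<omega>) - \<mu>)^2 \<partial>M)" by (rule gZW) measurable
    finally show ?thesis using True by simp
  next
    case False
    have "indep_vars (\<lambda>_. borel) V {i, j}" by (rule indep_vars_subset[OF indV]) auto
    hence "(\<integral>\<omega>. (\<Prod>k\<in>{i,j}. V k \<omega>) \<partial>M) = (\<Prod>k\<in>{i,j}. \<integral>\<omega>. V k \<omega> \<partial>M)"
      by (intro indep_vars_lebesgue_integral) (auto intro: Vint)
    thus ?thesis using False EV by simp
  qed
  have sq: "(\<Sum>i\<in>I. V i \<omega>)^2 = (\<Sum>i\<in>I. \<Sum>j\<in>I. V i \<omega> * V j \<omega>)" for \<omega>
    by (simp add: power2_eq_square sum_product)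
  have "(\<integral>\<omega>. (\<Sum>i\<in>I. V i \<omega>)^2 \<partial>M) = (\<Sum>i\<in>I. \<Sum>j\<in>I. \<integral>\<omega>. V i \<omega> * V j \<omega> \<partial>M)"
    unfolding sq
    by (simp add: Bochner_Integration.integral_sum integrable_sum Vint2)
  also have "\<dots> = real (card I) * (\<integral>\<omega>. (g (W \<omega>) - \<mu>)^2 \<partial>M)"
    using I by (simp add: cross)
  finally show "(\<integral>\<omega>. (\<Sum>i\<in>I. g (Z i \<omega>) - (\<integral>\<omega>'. g (W \<omega>') \<partial>M))^2 \<partial>M)
          = real (card I) * (\<integral>\<omega>. (g (W \<omega>) - (\<integral>\<omega>'. g (W \<omega>') \<partial>M))^2 \<partial>M)"
    by (simp add: V_def \<mu>_def)
  have "integrable M (\<lambda>\<omega>. (\<Sum>i\<in>I. V i \<omega>)^2)"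
    unfolding sq by (auto intro!: integrable_sum Vint2)
  thus "integrable M (\<lambda>\<omega>. (\<Sum>i\<in>I. g (Z i \<omega>) - (\<integral>\<omega>'. g (W \<omega>') \<partial>M))^2)"
    by (simp add: V_def \<mu>_def)
qed

lemma sum_rearr:
  fixes c x y :: real
  shows "c * (\<Sum>i\<in>I. a i - x) - c * (\<Sum>i\<in>I. bb i - y) = c * (\<Sum>i\<in>I. (a i - bb i) - (x - y))"
proof -
  have "(\<Sum>i\<in>I. a i - x) - (\<Sum>i\<in>I. bb i - y) = (\<Sum>i\<in>I. (a i - x) - (bb i - y))"
    by (simp add: sum_subtractf)
  also have "\<dots> = (\<Sum>i\<in>I. (a i - bb i) - (x - y))" by (rule sum.cong) auto
  finally show ?thesis by (simp add: right_diff_distrib[symmetric])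
qed

lemma alg:
  fixes F bb gk gl xk xl G :: real
  assumes F: "0 < F" and bb: "0 < bb" and gk: "\<bar>gk\<bar> \<le> G * F" and gl: "\<bar>gl\<bar> \<le> G * F"
    and xk: "\<bar>xk\<bar> \<le> G" and xl: "\<bar>xl\<bar> \<le> G"
  defines "A \<equiv> gk / max F bb * (gl / max F bb) + xl * (gk / max F bb) * F / (2 * max F bb)
                + xk * (gl / max F bb) * F / (2 * max F bb)"
    and "B \<equiv> gk / F * (gl / F) + 1/2 * xl * (gk / F) + 1/2 * xk * (gl / F)"
  shows "\<bar>A - B\<bar> \<le> (if F < bb then 2 * G^2 else 0)" and "\<bar>A\<bar> \<le> 2 * G^2" and "\<bar>B\<bar> \<le> 2 * G^2"
proof -
  define m where "m = max F bb"
  define t where "t = F / m"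
  define rk where "rk = gk / F"
  define rl where "rl = gl / F"
  have m: "0 < m" "F \<le> m" using F bb by (auto simp: m_def)
  have t: "0 < t" "t \<le> 1" using m F by (auto simp: t_def)
  have G: "0 \<le> G" using xk by linarith
  have rk: "\<bar>rk\<bar> \<le> G" using gk F by (simp add: rk_def abs_div pos_divide_le_eq)
  have rl: "\<bar>rl\<bar> \<le> G" using gl F by (simp add: rl_def abs_div pos_divide_le_eq)
  have B: "B = rk * rl + 1/2 * xl * rk + 1/2 * xk * rl" by (simp add: B_def rk_def rl_def)
  have gkm: "gk / m = rk * t" and glm: "gl / m = rl * t" using F m by (auto simp: rk_def rl_def t_def)
  have Fm: "F / (2 * m) = t / 2" by (simp add: t_def)
  have A: "A = t^2 * B"
  proof -
    have "A = gk / m * (gl / m) + xl * (gk / m) * (F / (2 * m)) + xk * (gl / m) * (F / (2 * m))"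
      by (simp add: A_def m_def)
    also have "\<dots> = t^2 * B" unfolding gkm glm Fm B by (simp add: algebra_simps power2_eq_square)
    finally show ?thesis .
  qed
  have "\<bar>rk * rl\<bar> \<le> G * G" using rk rl G by (simp add: abs_mult mult_mono)
  moreover have "\<bar>xl * rk\<bar> \<le> G * G" using rk xl G by (simp add: abs_mult mult_mono)
  moreover have "\<bar>xk * rl\<bar> \<le> G * G" using rl xk G by (simp add: abs_mult mult_mono)
  moreover have "\<bar>B\<bar> \<le> \<bar>rk * rl\<bar> + \<bar>xl * rk\<bar> / 2 + \<bar>xk * rl\<bar> / 2"
  proof -
    have "\<And>u v w :: real. \<bar>u + 1/2 * v + 1/2 * w\<bar> \<le> \<bar>u\<bar> + \<bar>v\<bar>/2 + \<bar>w\<bar>/2" by arith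
    thus ?thesis unfolding B by (metis mult.assoc)
  qed
  ultimately show Bb: "\<bar>B\<bar> \<le> 2 * G^2" unfolding power2_eq_square by linarith
  have t2: "0 \<le> t^2" "t^2 \<le> 1" using t by (auto simp: power_le_one)
  have "t^2 * \<bar>B\<bar> \<le> 1 * \<bar>B\<bar>" by (rule mult_right_mono) (use t2 in auto)
  thus "\<bar>A\<bar> \<le> 2 * G^2" unfolding A abs_mult using t2 Bb by simp
  show "\<bar>A - B\<bar> \<le> (if F < bb then 2 * G^2 else 0)"
  proof (cases "F < bb")
    case True
    have "A - B = - ((1 - t^2) * B)" unfolding A by (simp add: algebra_simps)
    hence "\<bar>A - B\<bar> = \<bar>1 - t^2\<bar> * \<bar>B\<bar>" by (simp add: abs_mult)
    also have "\<bar>1 - t^2\<bar> = 1 - t^2" using t2 by simp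
    finally have "\<bar>A - B\<bar> = (1 - t^2) * \<bar>B\<bar>" .
    also have "\<dots> \<le> 1 * (2 * G^2)" using t2 Bb by (intro mult_mono) auto
    finally show ?thesis using True by simp
  next
    case False
    hence "m = F" by (simp add: m_def)
    hence "t = 1" using F by (simp add: t_def)
    thus ?thesis using False A by simp
  qed
qed

theorem lemma9:
  fixes M :: "'a measure" and X :: "'a \<Rightarrow> real ^ 'd" and Y :: "'a \<Rightarrow> real"
    and Xs :: "nat \<Rightarrow> 'a \<Rightarrow> real ^ 'd" and Ys :: "nat \<Rightarrow> 'a \<Rightarrow> real"
    and f :: "real \<Rightarrow> real" and fXY :: "'d \<Rightarrow> real \<Rightarrow> real \<Rightarrow> real"
    and \<phi> \<psi> \<Phi> :: "real \<Rightarrow> real" and jn :: "nat \<Rightarrow> int" and b :: "nat \<Rightarrow> real"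
    and G c1 c2 :: real and k l :: 'd
  assumes P: "prob_space M"
    and X_rv: "X \<in> borel_measurable M"
    and Y_dens: "distributed M lborel Y (\<lambda>y. ennreal (f y))"
    and f_pos: "\<forall>y. 0 < f y"
    and fXY_nonneg: "\<forall>j x y. 0 \<le> fXY j x y"
    and joint_dens: "\<forall>j. distributed M (lborel \<Otimes>\<^sub>M lborel) (\<lambda>\<omega>. (X \<omega> $ j, Y \<omega>))
                          (\<lambda>p. ennreal (fXY j (fst p) (snd p)))"
    and f_L2: "L2 f" and g_L2: "\<forall>j. L2 (gfun fXY j)"
    and sample_indep: "prob_space.indep_vars M (\<lambda>_. borel) (\<lambda>i \<omega>. (Xs i \<omega>, Ys i \<omega>)) UNIV"
    and sample_distr: "\<forall>i. distr M borel (\<lambda>\<omega>. (Xs i \<omega>, Ys i \<omega>)) = distr M borel (\<lambda>\<omega>. (X \<omega>, Y \<omega>))"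
    \<comment> \<open>(A1)\<close>
    and A1: "0 < G" "\<forall>\<omega>\<in>space M. norm (X \<omega>) \<le> G"
    \<comment> \<open>(A2)\<close>
    and A2_f: "thrice_differentiable f" and A2_g: "\<forall>j. thrice_differentiable (gfun fXY j)"
    and A2_lip: "\<exists>U c. open U \<and> 0 \<in> U \<and> 0 < c \<and>
        (\<forall>y u. u \<in> U \<longrightarrow>
           \<bar>(deriv ^^ 3) f (y + u) - (deriv ^^ 3) f y\<bar> \<le> c * \<bar>u\<bar> \<and>
           (\<forall>j. \<bar>(deriv ^^ 3) (gfun fXY j) (y + u) - (deriv ^^ 3) (gfun fXY j) y\<bar> \<le> c * \<bar>u\<bar>))"
    \<comment> \<open>(A4)\<close>
    and A4_onb: "is_wavelet_ONB \<phi> \<psi>"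
    and A4: "bounded (range \<phi>)" "bounded (range \<psi>)" "compact_support \<phi>" "compact_support \<psi>"
    \<comment> \<open>(A5)\<close>
    and A5_dom: "\<forall>x y. \<bar>wavelet_kernel \<phi> x y\<bar> \<le> \<Phi> (x - y)"
    and A5_Phi: "\<forall>u. 0 \<le> \<Phi> u" "bounded (range \<Phi>)" "compact_support \<Phi>" "\<forall>u. \<Phi> (- u) = \<Phi> u"
    and A5_int: "integrable lborel (\<lambda>u. u^2 * (\<Phi> u)^2)"
       "\<forall>m\<in>{0,1,4::nat}. integrable lborel (\<lambda>u. \<bar>u\<bar>^m * \<Phi> u)"
    and A5_mom: "\<forall>x. \<forall>m\<in>{1,2,3::nat}. (\<integral>y. wavelet_kernel \<phi> x y * (y - x)^m \<partial>lborel) = 0"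
    \<comment> \<open>(A6)\<close>
    and A6_j: "mono jn" "filterlim jn at_top sequentially"
    and A6_b: "\<forall>n. 0 < b n" "b \<longlonglongrightarrow> 0"
    and A6_rates: "seq_equiv (\<lambda>n. 2 powr (- real_of_int (jn n))) (\<lambda>n. real n powr (- c1))"
       "seq_equiv b (\<lambda>n. real n powr (- c2))"
    and A6_c: "0 < c2" "c2 < 1/10" "1/8 + c2/4 < c1" "c1 < 1/4 - c2"
    \<comment> \<open>(A7)\<close>
    and A7_sq: "\<forall>j. integrable M (\<lambda>\<omega>. (Rfun f fXY j (Y \<omega>))^2)"
    and A7_tail: "\<forall>k' l' (a :: nat \<Rightarrow> real). (\<forall>n. 0 < a n) \<and> seq_equiv a b \<longrightarrow>
        (\<lambda>n. sqrt (real n) * (\<integral>\<omega>. \<bar>Rfun f fXY k' (Y \<omega>) * Rfun f fXY l' (Y \<omega>)\<bar> *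
               (if f (Y \<omega>) \<le> a n then 1 else 0) \<partial>M)) \<longlonglongrightarrow> 0"
  shows "o_p_one M (\<lambda>n \<omega>.
     1 / sqrt (real n) * (\<Sum>i\<in>{1..n}.
        (Rbfun (b n) f fXY k (Ys i \<omega>) * Rbfun (b n) f fXY l (Ys i \<omega>)
         + Xs i \<omega> $ l * Rbfun (b n) f fXY k (Ys i \<omega>) * f (Ys i \<omega>) / (2 * max (f (Ys i \<omega>)) (b n))
         + Xs i \<omega> $ k * Rbfun (b n) f fXY l (Ys i \<omega>) * f (Ys i \<omega>) / (2 * max (f (Ys i \<omega>)) (b n)))
        - (\<integral>\<omega>'. Rbfun (b n) f fXY k (Y \<omega>') * Rbfun (b n) f fXY l (Y \<omega>')
         + X \<omega>' $ l * Rbfun (b n) f fXY k (Y \<omega>') * f (Y \<omega>') / (2 * max (f (Y \<omega>')) (b n))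
         + X \<omega>' $ k * Rbfun (b n) f fXY l (Y \<omega>') * f (Y \<omega>') / (2 * max (f (Y \<omega>')) (b n)) \<partial>M))
   - 1 / sqrt (real n) * (\<Sum>i\<in>{1..n}.
        Rfun f fXY k (Ys i \<omega>) * Rfun f fXY l (Ys i \<omega>)
        + 1/2 * Xs i \<omega> $ l * Rfun f fXY k (Ys i \<omega>)
        + 1/2 * Xs i \<omega> $ k * Rfun f fXY l (Ys i \<omega>)
        - 2 * (\<integral>\<omega>'. Rfun f fXY k (Y \<omega>') * Rfun f fXY l (Y \<omega>') \<partial>M)))"
proof -
  interpret prob_space M by (rule P)
  have fm[measurable]: "f \<in> borel_measurable borel" using f_L2 by (simp add: L2_def)
  have gm[measurable]: "gfun fXY j \<in> borel_measurable borel" for j using g_L2 by (simp add: L2_def)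
  have gm': "(\<lambda>y. gfun fXY j y) \<in> borel_measurable borel" for j by simp
  have Xjm[measurable]: "(\<lambda>\<omega>. X \<omega> $ j) \<in> borel_measurable M" for j
    using measurable_compose[OF X_rv borel_measurable_nth] by simp
  have Rm[measurable]: "(\<lambda>y. Rfun f fXY j y) \<in> borel_measurable borel" for j
    unfolding Rfun_def by measurable
  have Rbm[measurable]: "(\<lambda>y. Rbfun c f fXY j y) \<in> borel_measurable borel" for c j
    unfolding Rbfun_def by measurable
  have Ym[measurable]: "Y \<in> borel_measurable M"
    using distributed_measurable[OF Y_dens] by simp
  note X_rv[measurable]
  have XYm[measurable]: "(\<lambda>\<omega>. (X \<omega>, Y \<omega>)) \<in> borel_measurable M" by measurable
  have Zm[measurable]: "(\<lambda>\<omega>. (Xs i \<omega>, Ys i \<omega>)) \<in> borel_measurable M" for i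
    using sample_indep by (auto simp: indep_vars_def)
  have G0: "0 \<le> G" using A1(1) by simp
  have Xb: "\<forall>\<omega>\<in>space M. \<bar>X \<omega> $ j\<bar> \<le> G" for j
    using A1(2) component_le_norm_cart order_trans by blast
  have gb: "AE y in lborel. \<bar>gfun fXY j y\<bar> \<le> G * f y" for j
    unfolding gfun_def
    by (rule g_bound[OF P Y_dens _ _ _ G0 f_pos]) (use fXY_nonneg joint_dens Xb in auto)
  have Rlb: "AE y in lborel. \<bar>Rfun f fXY j y\<bar> \<le> G" for j
    using gb[of j]
  proof eventually_elim
    case (elim y)
    have "0 < f y" using f_pos by simp
    thus ?case using elim by (simp add: Rfun_def abs_div pos_divide_le_eq)
  qed
  have RM: "AE \<omega> in M. \<bar>Rfun f fXY j (Y \<omega>)\<bar> \<le> G" for j by (rule AE_from_density[OF Y_dens Rlb])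
  have gM: "AE \<omega> in M. \<bar>gfun fXY j (Y \<omega>)\<bar> \<le> G * f (Y \<omega>)" for j by (rule AE_from_density[OF Y_dens gb])
  have tw: "(\<integral>\<omega>. X \<omega> $ j * Rfun f fXY i (Y \<omega>) \<partial>M) = (\<integral>\<omega>. Rfun f fXY j (Y \<omega>) * Rfun f fXY i (Y \<omega>) \<partial>M)" for i j
  proof -
    have "(\<integral>\<omega>. X \<omega> $ j * Rfun f fXY i (Y \<omega>) \<partial>M)
      = (\<integral>\<omega>. (\<integral>x. x * fXY j x (Y \<omega>) \<partial>lborel) / f (Y \<omega>) * Rfun f fXY i (Y \<omega>) \<partial>M)"
      by (rule tower[OF P Y_dens _ _ Xb[of j] f_pos _ _ _ _ Rlb[of i]])
        (use fXY_nonneg joint_dens gm'[of j] in \<open>auto simp: gfun_def\<close>)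
    thus ?thesis by (simp add: Rfun_def gfun_def)
  qed
  define Af where "Af n x y = Rbfun (b n) f fXY k y * Rbfun (b n) f fXY l y
         + x $ l * Rbfun (b n) f fXY k y * f y / (2 * max (f y) (b n))
         + x $ k * Rbfun (b n) f fXY l y * f y / (2 * max (f y) (b n))" for n and x :: "real ^ 'd" and y
  define Bf where "Bf x y = Rfun f fXY k y * Rfun f fXY l y
        + 1/2 * x $ l * Rfun f fXY k y
        + 1/2 * x $ k * Rfun f fXY l y" for x :: "real ^ 'd" and y
  define Hf where "Hf n p = Af n (fst p) (snd p) - Bf (fst p) (snd p)" for n p
  have nthm[measurable]: "(\<lambda>x::(real^'d) \<times> real. fst x $ j) \<in> borel_measurable (borel \<Otimes>\<^sub>M borel)" for j
    by (rule measurable_compose[OF measurable_fst borel_measurable_nth])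
  have Afm0: "(\<lambda>p. Af n (fst p) (snd p)) \<in> borel_measurable (borel \<Otimes>\<^sub>M borel)" for n
    unfolding Af_def by measurable
  have Bfm0: "(\<lambda>p. Bf (fst p) (snd p)) \<in> borel_measurable (borel \<Otimes>\<^sub>M borel)"
    unfolding Bf_def by measurable
  have Hm[measurable]: "Hf n \<in> borel_measurable borel" for n
    using borel_measurable_diff[OF Afm0[of n] Bfm0] unfolding borel_prod Hf_def[abs_def] .
  have AXm[measurable]: "(\<lambda>\<omega>. Af n (X \<omega>) (Y \<omega>)) \<in> borel_measurable M" for n
    using measurable_compose[OF XYm Afm0[of n, unfolded borel_prod]] by simp
  have BXm[measurable]: "(\<lambda>\<omega>. Bf (X \<omega>) (Y \<omega>)) \<in> borel_measurable M"
    using measurable_compose[OF XYm Bfm0[unfolded borel_prod]] by simp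
  have HB: "AE \<omega> in M. \<forall>n. \<bar>Hf n (X \<omega>, Y \<omega>)\<bar> \<le> (if f (Y \<omega>) < b n then 2 * G^2 else 0)
      \<and> \<bar>Af n (X \<omega>) (Y \<omega>)\<bar> \<le> 2 * G^2 \<and> \<bar>Bf (X \<omega>) (Y \<omega>)\<bar> \<le> 2 * G^2"
    using gM[of k] gM[of l] AE_space
  proof eventually_elim
    case (elim \<omega>)
    show ?case
    proof
      fix n
      note a = alg[where F="f (Y \<omega>)" and bb="b n" and gk="gfun fXY k (Y \<omega>)" and gl="gfun fXY l (Y \<omega>)"
          and xk="X \<omega> $ k" and xl="X \<omega> $ l" and G=G]
      show "\<bar>Hf n (X \<omega>, Y \<omega>)\<bar> \<le> (if f (Y \<omega>) < b n then 2 * G^2 else 0)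
         \<and> \<bar>Af n (X \<omega>) (Y \<omega>)\<bar> \<le> 2 * G^2 \<and> \<bar>Bf (X \<omega>) (Y \<omega>)\<bar> \<le> 2 * G^2"
        using a f_pos A6_b(1) elim Xb[of k] Xb[of l]
        by (simp add: Hf_def Af_def Bf_def Rbfun_def Rfun_def)
    qed
  qed
  have Aint: "integrable M (\<lambda>\<omega>. Af n (X \<omega>) (Y \<omega>))" for n
    by (rule integrable_const_bound[where B="2 * G^2"]) (use HB in \<open>auto elim: eventually_mono\<close>)
  have RRint: "integrable M (\<lambda>\<omega>. Rfun f fXY i (Y \<omega>) * Rfun f fXY j (Y \<omega>))" for i j
  proof (rule integrable_const_bound[where B="G * G"])
    show "AE \<omega> in M. norm (Rfun f fXY i (Y \<omega>) * Rfun f fXY j (Y \<omega>)) \<le> G * G"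
      using RM[of i] RM[of j] by eventually_elim (auto simp: abs_mult intro!: mult_mono)
  qed measurable
  have XRint: "integrable M (\<lambda>\<omega>. X \<omega> $ i * Rfun f fXY j (Y \<omega>))" for i j
  proof (rule integrable_const_bound[where B="G * G"])
    show "AE \<omega> in M. norm (X \<omega> $ i * Rfun f fXY j (Y \<omega>)) \<le> G * G"
      using RM[of j] AE_space by eventually_elim (use Xb in \<open>auto simp: abs_mult intro!: mult_mono\<close>)
  qed measurable
  define ER where "ER = (\<integral>\<omega>'. Rfun f fXY k (Y \<omega>') * Rfun f fXY l (Y \<omega>') \<partial>M)"
  define \<mu> where "\<mu> n = (\<integral>\<omega>. Hf n (X \<omega>, Y \<omega>) \<partial>M)" for n
  have EB: "(\<integral>\<omega>. Bf (X \<omega>) (Y \<omega>) \<partial>M) = 2 * ER"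
  proof -
    have "(\<integral>\<omega>. Bf (X \<omega>) (Y \<omega>) \<partial>M) = ER + 1/2 * (\<integral>\<omega>. X \<omega> $ l * Rfun f fXY k (Y \<omega>) \<partial>M)
         + 1/2 * (\<integral>\<omega>. X \<omega> $ k * Rfun f fXY l (Y \<omega>) \<partial>M)"
      unfolding Bf_def ER_def using RRint XRint by (simp add: mult.assoc)
    also have "\<dots> = 2 * ER" unfolding tw ER_def by (simp add: mult.commute)
    finally show ?thesis .
  qed
  have EH: "\<mu> n = (\<integral>\<omega>. Af n (X \<omega>) (Y \<omega>) \<partial>M) - 2 * ER" for n
  proof -
    have Bint: "integrable M (\<lambda>\<omega>. Bf (X \<omega>) (Y \<omega>))"
      by (rule integrable_const_bound[where B="2 * G^2"]) (use HB in \<open>auto elim: eventually_mono\<close>)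
    show ?thesis unfolding \<mu>_def Hf_def using Aint[of n] Bint EB by simp
  qed
  define V where "V n = (\<integral>\<omega>. (Hf n (X \<omega>, Y \<omega>) - \<mu> n)^2 \<partial>M)" for n
  have HXm[measurable]: "(\<lambda>\<omega>. Hf n (X \<omega>, Y \<omega>)) \<in> borel_measurable M" for n by measurable
  have Hb: "AE \<omega> in M. \<bar>Hf n (X \<omega>, Y \<omega>)\<bar> \<le> 2 * G^2" for n
    using HB by eventually_elim (metis (full_types) order_trans zero_le_power2 mult_nonneg_nonneg zero_le_numeral)
  have dis: "\<forall>i. distr M borel ((\<lambda>i \<omega>. (Xs i \<omega>, Ys i \<omega>)) i) = distr M borel (\<lambda>\<omega>. (X \<omega>, Y \<omega>))"
    using sample_distr by simp
  have Sq: "(\<integral>\<omega>. (\<Sum>i\<in>{1..n}. Hf n (Xs i \<omega>, Ys i \<omega>) - \<mu> n)^2 \<partial>M) = real n * V n" for n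
    using iid_sq(1)[OF P sample_indep dis XYm Hm Hb, of "{1..n}"] by (simp add: V_def \<mu>_def)
  have Sint: "integrable M (\<lambda>\<omega>. (\<Sum>i\<in>{1..n}. Hf n (Xs i \<omega>, Ys i \<omega>) - \<mu> n)^2)" for n
    using iid_sq(2)[OF P sample_indep dis XYm Hm Hb, of "{1..n}"] by (simp add: \<mu>_def)
  have V0: "0 \<le> V n" for n unfolding V_def by (rule integral_nonneg_AE) auto
  have Hint: "integrable M (\<lambda>\<omega>. Hf n (X \<omega>, Y \<omega>))" for n
    by (rule integrable_const_bound[where B="2 * G^2"]) (use Hb in auto)
  have H2b: "AE \<omega> in M. norm ((Hf n (X \<omega>, Y \<omega>))^2) \<le> (2 * G^2)^2" for n
    using Hb[of n]
  proof eventually_elim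
    case (elim \<omega>)
    have "\<bar>Hf n (X \<omega>, Y \<omega>)\<bar>^2 \<le> (2 * G^2)^2" by (rule power_mono) (use elim in auto)
    thus ?case by simp
  qed
  have H2int: "integrable M (\<lambda>\<omega>. (Hf n (X \<omega>, Y \<omega>))^2)" for n
    by (rule integrable_const_bound[OF H2b]) measurable
  have Vle: "V n \<le> (\<integral>\<omega>. (Hf n (X \<omega>, Y \<omega>))^2 \<partial>M)" for n
    using variance_eq[OF Hint[of n] H2int[of n]] by (simp add: V_def \<mu>_def)
  have E2lim: "(\<lambda>n. \<integral>\<omega>. (Hf n (X \<omega>, Y \<omega>))^2 \<partial>M) \<longlonglongrightarrow> (\<integral>\<omega>. 0 \<partial>M)"
  proof (rule integral_dominated_convergence[where w="\<lambda>\<omega>. (2 * G^2)^2"])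
    show "AE \<omega> in M. (\<lambda>n. (Hf n (X \<omega>, Y \<omega>))^2) \<longlonglongrightarrow> 0"
      using HB AE_space
    proof eventually_elim
      case (elim \<omega>)
      note E = elim
      have "\<forall>\<^sub>F n in sequentially. b n < f (Y \<omega>)"
        using order_tendstoD(2)[OF A6_b(2), of "f (Y \<omega>)"] f_pos by simp
      hence "\<forall>\<^sub>F n in sequentially. (Hf n (X \<omega>, Y \<omega>))^2 = 0"
      proof eventually_elim
        case (elim n)
        have "\<bar>Hf n (X \<omega>, Y \<omega>)\<bar> \<le> (if f (Y \<omega>) < b n then 2 * G^2 else 0)"
          using E(1) by blast
        hence "Hf n (X \<omega>, Y \<omega>) = 0" using elim by (simp split: if_splits)
        thus ?case by simp
      qed
      thus ?case by (rule tendsto_eventually)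
    qed
  qed (use H2b in auto)
  hence E2lim': "(\<lambda>n. \<integral>\<omega>. (Hf n (X \<omega>, Y \<omega>))^2 \<partial>M) \<longlonglongrightarrow> 0" by simp
  have Vlim: "V \<longlonglongrightarrow> 0"
    by (rule tendsto_sandwich[OF _ _ tendsto_const E2lim']) (use V0 Vle in auto)
  define Zn where "Zn n \<omega> = 1 / sqrt (real n) * (\<Sum>i\<in>{1..n}. Hf n (Xs i \<omega>, Ys i \<omega>) - \<mu> n)" for n \<omega>
  have Znm[measurable]: "Zn n \<in> borel_measurable M" for n
  proof -
    have "(\<lambda>\<omega>. Hf n (Xs i \<omega>, Ys i \<omega>)) \<in> borel_measurable M" for i
      using measurable_compose[OF Zm[of i] Hm[of n]] by simp
    thus ?thesis unfolding Zn_def by measurable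
  qed
  have key: "o_p_one M Zn"
    unfolding o_p_one_def
  proof (intro allI impI)
    fix e :: real assume e: "0 < e"
    have bnd: "measure M {\<omega> \<in> space M. e < \<bar>Zn n \<omega>\<bar>} \<le> V n / e^2" for n
    proof -
      have "measure M {\<omega> \<in> space M. e < \<bar>Zn n \<omega>\<bar>} \<le> measure M {\<omega> \<in> space M. \<bar>Zn n \<omega>\<bar> \<ge> e}"
        by (rule finite_measure_mono) auto
      also have "\<dots> \<le> (\<integral>\<omega>. (Zn n \<omega>)^2 \<partial>M) / e^2"
      proof (rule second_moment_method)
        show "integrable M (\<lambda>\<omega>. (Zn n \<omega>)^2)"
          unfolding Zn_def power_mult_distrib by (intro integrable_mult_right Sint)
      qed (use e in auto)
      also have "(\<integral>\<omega>. (Zn n \<omega>)^2 \<partial>M) = (1 / sqrt (real n))^2 * (real n * V n)"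
        unfolding Zn_def power_mult_distrib integral_mult_right_zero Sq ..
      also have "\<dots> \<le> V n"
        using V0[of n] by (cases "n = 0") (auto simp: power_divide)
      finally show ?thesis using e by (simp add: divide_right_mono)
    qed
    have "(\<lambda>n. V n / e^2) \<longlonglongrightarrow> 0 / e^2" by (intro tendsto_divide Vlim tendsto_const) (use e in auto)
    hence lim0: "(\<lambda>n. V n / e^2) \<longlonglongrightarrow> 0" by simp
    show "(\<lambda>n. measure M {\<omega> \<in> space M. e < \<bar>Zn n \<omega>\<bar>}) \<longlonglongrightarrow> 0"
      by (rule tendsto_sandwich[OF _ _ tendsto_const lim0]) (use bnd in auto)
  qed
  show ?thesis
    apply (rule back_subst[of "o_p_one M", OF key])
    apply (intro ext)
    apply (simp only: sum_rearr)
    apply (simp add: Zn_def EH Hf_def Af_def Bf_def ER_def)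
    done
qed

end
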